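(* For every $i\in[d]$, all $x$ with $\|x\|_2\le1$ and every time step $t\ge1$, with probability at least $1-\frac1{c_1}-\exp\!\left(-\frac{32(c_4-1)^2\eta^2m^2\bar\Lambda^2t^2}{\pi}\right)$ over the random initialization, for constants $c_1>10$ and $c_4\ge1$, $$\big|\tilde L_i(\nabla f^{(t)},x)-\tilde L_i(\nabla g^{(t)},x)\big|\le3\delta_t,\qquad \delta_t=\frac{192\eta^2m^{1.5}\bar\Lambda^2c_1c_4\epsilon_at^2\sqrt{\log m}}{\sqrt\pi},\quad\bar\Lambda=6c_1\epsilon_a\sqrt{2\log m}.$$
   Context: UNF setting. Fix $d\ge1$, $m\ge2$, $\epsilon_a>0$, $Q\ge1$, learning rate $\eta>0$. For $\|x_{1:i}\|_2\le1$, $\hat x_{1:i}=(x_1,\dots,x_i,\sqrt{1-\|x_{1:i}\|_2^2})$. $\sigma(u)=\max\{u,0\}$, $\sigma'(u)=\mathbf 1\{u\ge0\}$; $\phi(u)=e^u$ ($u<0$), $u+1$ ($u\ge0$). Frozen random initial parameters $a_{i,r}\sim\mathcal N(0,\epsilon_a^2)$, $\bar w_{i,r}\sim\mathcal N(0,\frac1mI_{i+1})$, $\bar b_{i,r}\sim\mathcal N(0,\frac1m)$, independent. Offsets $\theta_i=(w_{i,r},b_{i,r})_r$. Network $N(x_{1:i};\theta_i)=\sum_ra_{i,r}\sigma(\langle\bar w_{i,r}+w_{i,r},\hat x_{1:i}\rangle+\bar b_{i,r}+b_{i,r})$; pseudo-network $P(x_{1:i};\theta_i)=\sum_ra_{i,r}\sigma'(\langle\bar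 w_{i,r},\hat x_{1:i}\rangle+\bar b_{i,r})(\langle\bar w_{i,r}+w_{i,r},\hat x_{1:i}\rangle+\bar b_{i,r}+b_{i,r})$. With $\Delta_{x_i}=(x_i+1)/Q$ and $q^{(j)}_i=(x_1,\dots,x_{i-1},-1+j\Delta_{x_i})$, define for a model $h\in\{N,P\}$ with offsets $\theta_i$ the per-coordinate approximate loss $\sum_{j=1}^Q\Delta_{x_i}\phi(h(q^{(j)}_i;\theta_i))-\log\phi(h(x_{1:i};\theta_i))$; $\tilde L_i(\nabla f^{(t)},x)$ is this quantity for $h=N$ and $\tilde L_i(\nabla g^{(t)},x)$ for $h=P$, both with $\theta_i=\theta_i^{(t)}$. $\theta^{(t)}$ are SGD iterates on the network loss $\tilde L=\sum_i\tilde L_i$ (with $h=N$): $\theta^{(0)}=0$, $\theta^{(t+1)}=\theta^{(t)}-\eta\nabla_\theta\tilde L(\nabla f^{(t)},x^{(t)})$, $x^{(t)}$ uniform from a training set in the unit ball. *)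

theory Defs
  imports "HOL-Probability.Probability"
begin

definition relu :: "real \<Rightarrow> real" where "relu u = max u 0"
definition relu' :: "real \<Rightarrow> real" where "relu' u = (if u \<ge> 0 then 1 else 0)"
definition phi :: "real \<Rightarrow> real" where "phi u = (if u < 0 then exp u else u + 1)"
definition phi' :: "real \<Rightarrow> real" where "phi' u = (if u < 0 then exp u else 1)"

text \<open>Points of R^d are functions nat => real, coordinates 1..d.
  xhat i x has coordinates 1..i+1.\<close>
definition xhat :: "nat \<Rightarrow> (nat \<Rightarrow> real) \<Rightarrow> nat \<Rightarrow> real" where
  "xhat i x k = (if k \<le> i then x k else sqrt (1 - (\<Sum>l=1..i. (x l)\<^sup>2)))"

definition Delta :: "nat \<Rightarrow> nat \<Rightarrow> (nat \<Rightarrow> real) \<Rightarrow> real" where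
  "Delta Q i x = (x i + 1) / real Q"

definition qpt :: "nat \<Rightarrow> nat \<Rightarrow> nat \<Rightarrow> (nat \<Rightarrow> real) \<Rightarrow> (nat \<Rightarrow> real)" where
  "qpt Q j i x = x(i := -1 + real j * Delta Q i x)"

datatype pidx = Aidx nat nat | Widx nat nat nat | Bidx nat nat

definition init_index :: "nat \<Rightarrow> nat \<Rightarrow> pidx set" where
  "init_index d m =
     {Aidx i r | i r. i \<in> {1..d} \<and> r \<in> {1..m}}
   \<union> {Widx i r k | i r k. i \<in> {1..d} \<and> r \<in> {1..m} \<and> k \<in> {1..i+1}}
   \<union> {Bidx i r | i r. i \<in> {1..d} \<and> r \<in> {1..m}}"

definition gauss :: "real \<Rightarrow> real measure" where
  "gauss s = density lborel (normal_density 0 s)"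

definition init_dist :: "nat \<Rightarrow> real \<Rightarrow> pidx \<Rightarrow> real measure" where
  "init_dist m eps_a p = (case p of Aidx _ _ \<Rightarrow> gauss eps_a
                                 | Widx _ _ _ \<Rightarrow> gauss (1 / sqrt (real m))
                                 | Bidx _ _ \<Rightarrow> gauss (1 / sqrt (real m)))"

definition init_measure :: "nat \<Rightarrow> nat \<Rightarrow> real \<Rightarrow> (pidx \<Rightarrow> real) measure" where
  "init_measure d m eps_a = PiM (init_index d m) (init_dist m eps_a)"

text \<open>Offsets theta = (w, b) with w i r k and b i r.\<close>
type_synonym params = "(nat \<Rightarrow> nat \<Rightarrow> nat \<Rightarrow> real) \<times> (nat \<Rightarrow> nat \<Rightarrow> real)"

definition zero_params :: params where "zero_params = (\<lambda>_ _ _. 0, \<lambda>_ _. 0)"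

definition preact :: "(pidx \<Rightarrow> real) \<Rightarrow> params \<Rightarrow> nat \<Rightarrow> nat \<Rightarrow> (nat \<Rightarrow> real) \<Rightarrow> real" where
  "preact \<omega> th i r z =
     (\<Sum>k=1..i+1. (\<omega> (Widx i r k) + fst th i r k) * xhat i z k) + \<omega> (Bidx i r) + snd th i r"

definition Net :: "nat \<Rightarrow> (pidx \<Rightarrow> real) \<Rightarrow> params \<Rightarrow> nat \<Rightarrow> (nat \<Rightarrow> real) \<Rightarrow> real" where
  "Net m \<omega> th i z = (\<Sum>r=1..m. \<omega> (Aidx i r) * relu (preact \<omega> th i r z))"

definition Pseudo :: "nat \<Rightarrow> (pidx \<Rightarrow> real) \<Rightarrow> params \<Rightarrow> nat \<Rightarrow> (nat \<Rightarrow> real) \<Rightarrow> real" where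
  "Pseudo m \<omega> th i z =
     (\<Sum>r=1..m. \<omega> (Aidx i r) * relu' (preact \<omega> zero_params i r z) * preact \<omega> th i r z)"

definition Lapprox :: "nat \<Rightarrow> ((nat \<Rightarrow> real) \<Rightarrow> real) \<Rightarrow> nat \<Rightarrow> (nat \<Rightarrow> real) \<Rightarrow> real" where
  "Lapprox Q h i x =
     (\<Sum>j=1..Q. Delta Q i x * phi (h (qpt Q j i x))) - ln (phi (h x))"

definition gradN_w :: "(pidx \<Rightarrow> real) \<Rightarrow> params \<Rightarrow> nat \<Rightarrow> nat \<Rightarrow> nat \<Rightarrow> (nat \<Rightarrow> real) \<Rightarrow> real" where
  "gradN_w \<omega> th i r k z = \<omega> (Aidx i r) * relu' (preact \<omega> th i r z) * xhat i z k"

definition gradN_b :: "(pidx \<Rightarrow> real) \<Rightarrow> params \<Rightarrow> nat \<Rightarrow> nat \<Rightarrow> (nat \<Rightarrow> real) \<Rightarrow> real" where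
  "gradN_b \<omega> th i r z = \<omega> (Aidx i r) * relu' (preact \<omega> th i r z)"

text \<open>Chain rule for the loss: sum_j Delta phi'(N q_j) grad N(q_j) - phi'(N x)/phi(N x) grad N(x).
  Since theta_i only enters L_i, grad of L = sum_i L_i w.r.t. theta_i is grad of L_i.\<close>
definition gradL_w :: "nat \<Rightarrow> nat \<Rightarrow> (pidx \<Rightarrow> real) \<Rightarrow> params \<Rightarrow> (nat \<Rightarrow> real) \<Rightarrow> nat \<Rightarrow> nat \<Rightarrow> nat \<Rightarrow> real" where
  "gradL_w m Q \<omega> th x i r k =
     (\<Sum>j=1..Q. Delta Q i x * phi' (Net m \<omega> th i (qpt Q j i x)) * gradN_w \<omega> th i r k (qpt Q j i x))
     - phi' (Net m \<omega> th i x) / phi (Net m \<omega> th i x) * gradN_w \<omega> th i r k x"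

definition gradL_b :: "nat \<Rightarrow> nat \<Rightarrow> (pidx \<Rightarrow> real) \<Rightarrow> params \<Rightarrow> (nat \<Rightarrow> real) \<Rightarrow> nat \<Rightarrow> nat \<Rightarrow> real" where
  "gradL_b m Q \<omega> th x i r =
     (\<Sum>j=1..Q. Delta Q i x * phi' (Net m \<omega> th i (qpt Q j i x)) * gradN_b \<omega> th i r (qpt Q j i x))
     - phi' (Net m \<omega> th i x) / phi (Net m \<omega> th i x) * gradN_b \<omega> th i r x"

primrec sgd :: "nat \<Rightarrow> nat \<Rightarrow> real \<Rightarrow> (pidx \<Rightarrow> real) \<Rightarrow> (nat \<Rightarrow> nat \<Rightarrow> real) \<Rightarrow> nat \<Rightarrow> params" where
  "sgd m Q eta \<omega> xs 0 = zero_params"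
| "sgd m Q eta \<omega> xs (Suc t) =
     (let th = sgd m Q eta \<omega> xs t in
       (\<lambda>i r k. fst th i r k - eta * gradL_w m Q \<omega> th (xs t) i r k,
        \<lambda>i r. snd th i r - eta * gradL_b m Q \<omega> th (xs t) i r))"

end

theory Submission
  imports Defs
begin


definition nice :: "nat \<Rightarrow> (nat \<Rightarrow> real) \<Rightarrow> bool" where
  "nice i p \<longleftrightarrow> (\<Sum>k=1..i. (p k)\<^sup>2) \<le> 2"

definition ip :: "nat \<Rightarrow> (nat \<Rightarrow> real) \<Rightarrow> (nat \<Rightarrow> real) \<Rightarrow> real" where
  "ip i u v = (\<Sum>k=1..i+1. xhat i u k * xhat i v k)"

lemma sqrt_sq_abs: "(sqrt y)\<^sup>2 = \<bar>y\<bar>"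
  by (metis abs_of_nonneg abs_of_nonpos real_sqrt_abs2 real_sqrt_minus real_sqrt_pow2 power2_minus le_cases neg_0_le_iff_le)

lemma xhat_norm: assumes "nice i p" shows "(\<Sum>k=1..i+1. (xhat i p k)\<^sup>2) \<le> 3"
proof -
  let ?s = "\<Sum>l=1..i. (p l)\<^sup>2"
  have "(\<Sum>k=1..i+1. (xhat i p k)\<^sup>2) = (\<Sum>k=1..i. (xhat i p k)\<^sup>2) + (xhat i p (i+1))\<^sup>2"
    by simp
  also have "(\<Sum>k=1..i. (xhat i p k)\<^sup>2) = ?s" by (simp add: xhat_def)
  also have "(xhat i p (i+1))\<^sup>2 = \<bar>1 - ?s\<bar>" by (simp add: xhat_def sqrt_sq_abs)
  finally show ?thesis using assms unfolding nice_def by (simp add: sum_nonneg abs_if)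
qed

lemma ip_bound: assumes "nice i u" "nice i v" shows "\<bar>ip i u v\<bar> \<le> 3"
proof -
  have "(ip i u v)\<^sup>2 \<le> (\<Sum>k=1..i+1. (xhat i u k)\<^sup>2) * (\<Sum>k=1..i+1. (xhat i v k)\<^sup>2)"
    unfolding ip_def by (rule Cauchy_Schwarz_ineq_sum)
  also have "\<dots> \<le> 3 * 3"
    using xhat_norm[OF assms(1)] xhat_norm[OF assms(2)]
    by (intro mult_mono) (auto simp: sum_nonneg)
  finally have "(ip i u v)\<^sup>2 \<le> 3\<^sup>2" by simp
  then show ?thesis using abs_le_square_iff[of "ip i u v" 3] by simp
qed


definition ballpt :: "nat \<Rightarrow> (nat \<Rightarrow> real) \<Rightarrow> bool" where
  "ballpt d x \<longleftrightarrow> (\<Sum>k=1..d. (x k)\<^sup>2) \<le> 1"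

lemma ballpt_sub: assumes "ballpt d x" "A \<subseteq> {1..d}" shows "(\<Sum>k\<in>A. (x k)\<^sup>2) \<le> 1"
proof -
  have "(\<Sum>k\<in>A. (x k)\<^sup>2) \<le> (\<Sum>k=1..d. (x k)\<^sup>2)"
    by (rule sum_mono2) (use assms in auto)
  then show ?thesis using assms unfolding ballpt_def by simp
qed

lemma ballpt_coord: assumes "ballpt d x" "i \<in> {1..d}" shows "\<bar>x i\<bar> \<le> 1"
proof -
  have "(x i)\<^sup>2 \<le> 1" using ballpt_sub[OF assms(1), of "{i}"] assms(2) by simp
  then show ?thesis by (simp add: abs_square_le_1)
qed

lemma ballpt_nice: assumes "ballpt d x" "i \<in> {1..d}" shows "nice i x"
  using ballpt_sub[OF assms(1), of "{1..i}"] assms(2) unfolding nice_def by auto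

lemma Delta_nonneg: assumes "ballpt d x" "i \<in> {1..d}" shows "Delta Q i x \<ge> 0"
  using ballpt_coord[OF assms] unfolding Delta_def by simp

lemma sum_Delta: assumes "ballpt d x" "i \<in> {1..d}" shows "(\<Sum>j=1..Q. Delta Q i x) \<le> 2"
proof (cases "Q = 0")
  case True then show ?thesis by simp
next
  case False
  then have "(\<Sum>j=1..Q. Delta Q i x) = x i + 1" unfolding Delta_def by simp
  then show ?thesis using ballpt_coord[OF assms] by simp
qed

lemma qpt_nice: assumes "ballpt d x" "i \<in> {1..d}" "j \<in> {1..Q}" shows "nice i (qpt Q j i x)"
proof -
  let ?v = "-1 + real j * Delta Q i x"
  have xi: "\<bar>x i\<bar> \<le> 1" by (rule ballpt_coord[OF assms(1,2)])
  have jq: "real j / real Q \<le> 1" "0 \<le> real j / real Q" using assms(3) by auto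
  have "real j * Delta Q i x = (real j / real Q) * (x i + 1)" unfolding Delta_def by simp
  moreover have "(real j / real Q) * (x i + 1) \<le> 1 * 2"
    using jq xi by (intro mult_mono) auto
  moreover have "0 \<le> (real j / real Q) * (x i + 1)" using jq xi by simp
  ultimately have v: "\<bar>?v\<bar> \<le> 1" by linarith
  have "(\<Sum>k=1..i. (qpt Q j i x k)\<^sup>2) = (\<Sum>k\<in>{1..i}-{i}. (x k)\<^sup>2) + ?v\<^sup>2"
    using assms(2) by (subst sum.remove[of _ i]) (auto simp: qpt_def intro!: sum.cong)
  also have "(\<Sum>k\<in>{1..i}-{i}. (x k)\<^sup>2) \<le> 1"
    using ballpt_sub[OF assms(1), of "{1..i}-{i}"] assms(2) by force
  moreover have "?v\<^sup>2 \<le> 1" using v by (simp add: abs_square_le_1)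
  ultimately show ?thesis unfolding nice_def by linarith
qed


lemma phi_pos: "phi u > 0" unfolding phi_def by auto
lemma phi'_bounds: "0 \<le> phi' u" "phi' u \<le> 1" unfolding phi'_def by auto
lemma phi'_div: "0 \<le> phi' u / phi u" "phi' u / phi u \<le> 1"
  unfolding phi'_def phi_def by auto
lemma relu'_bounds: "0 \<le> relu' u" "relu' u \<le> 1" unfolding relu'_def by auto

definition Sg :: "nat \<Rightarrow> nat \<Rightarrow> (pidx \<Rightarrow> real) \<Rightarrow> params \<Rightarrow> (nat \<Rightarrow> real) \<Rightarrow> nat \<Rightarrow> nat \<Rightarrow> (nat \<Rightarrow> real) \<Rightarrow> real" where
  "Sg m Q \<omega> th x0 i r p = (\<Sum>k=1..i+1. gradL_w m Q \<omega> th x0 i r k * xhat i p k) + gradL_b m Q \<omega> th x0 i r"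

lemma Sg_eq: "Sg m Q \<omega> th x0 i r p =
   (\<Sum>j=1..Q. Delta Q i x0 * phi' (Net m \<omega> th i (qpt Q j i x0)) * \<omega> (Aidx i r) * relu' (preact \<omega> th i r (qpt Q j i x0)) * (ip i (qpt Q j i x0) p + 1))
   - phi' (Net m \<omega> th i x0) / phi (Net m \<omega> th i x0) * \<omega> (Aidx i r) * relu' (preact \<omega> th i r x0) * (ip i x0 p + 1)"
proof -
  define A where "A j = Delta Q i x0 * phi' (Net m \<omega> th i (qpt Q j i x0)) * \<omega> (Aidx i r) * relu' (preact \<omega> th i r (qpt Q j i x0))" for j
  define c where "c = phi' (Net m \<omega> th i x0) / phi (Net m \<omega> th i x0) * \<omega> (Aidx i r) * relu' (preact \<omega> th i r x0)"
  have w: "gradL_w m Q \<omega> th x0 i r k = (\<Sum>j=1..Q. A j * xhat i (qpt Q j i x0) k) - c * xhat i x0 k" for k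
    unfolding gradL_w_def gradN_w_def A_def c_def by (simp add: algebra_simps)
  have b: "gradL_b m Q \<omega> th x0 i r = (\<Sum>j=1..Q. A j) - c"
    unfolding gradL_b_def gradN_b_def A_def c_def by (simp add: algebra_simps)
  have "(\<Sum>k=1..i+1. gradL_w m Q \<omega> th x0 i r k * xhat i p k)
      = (\<Sum>k=1..i+1. (\<Sum>j=1..Q. A j * xhat i (qpt Q j i x0) k * xhat i p k)) - c * ip i x0 p"
    unfolding w ip_def by (simp add: sum_subtractf sum_distrib_left sum_distrib_right algebra_simps)
  also have "(\<Sum>k=1..i+1. (\<Sum>j=1..Q. A j * xhat i (qpt Q j i x0) k * xhat i p k)) = (\<Sum>j=1..Q. A j * ip i (qpt Q j i x0) p)"
    unfolding ip_def by (subst sum.swap) (simp add: sum_distrib_left algebra_simps)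
  finally have "Sg m Q \<omega> th x0 i r p = (\<Sum>j=1..Q. A j * ip i (qpt Q j i x0) p) - c * ip i x0 p + ((\<Sum>j=1..Q. A j) - c)"
    unfolding Sg_def b by simp
  also have "\<dots> = (\<Sum>j=1..Q. A j * (ip i (qpt Q j i x0) p + 1)) - c * (ip i x0 p + 1)"
    by (simp add: algebra_simps sum.distrib)
  finally show ?thesis unfolding A_def c_def by simp
qed

lemma aux5: fixes D f a g v :: real
  assumes "0 \<le> D" "0 \<le> f" "f \<le> 1" "0 \<le> g" "g \<le> 1" "\<bar>v\<bar> \<le> 4"
  shows "\<bar>D * f * a * g * v\<bar> \<le> D * (4 * \<bar>a\<bar>)"
proof -
  have "\<bar>D * f * a * g * v\<bar> = D * ((f * g) * (\<bar>a\<bar> * \<bar>v\<bar>))" using assms by (simp add: abs_mult)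
  also have "(f * g) * (\<bar>a\<bar> * \<bar>v\<bar>) \<le> 1 * (\<bar>a\<bar> * 4)"
    using assms by (intro mult_mono mult_left_mono mult_le_one) auto
  finally show ?thesis using assms(1) by (simp add: mult_left_mono algebra_simps)
     (metis mult.commute mult_left_mono order_trans \<open>\<bar>D * f * a * g * v\<bar> = D * (f * g * (\<bar>a\<bar> * \<bar>v\<bar>))\<close> \<open>f * g * (\<bar>a\<bar> * \<bar>v\<bar>) \<le> 1 * (\<bar>a\<bar> * 4)\<close> assms(1) mult_1 order_refl)
qed

lemma Sg_bound:
  assumes "ballpt d x0" "i \<in> {1..d}" "nice i p"
  shows "\<bar>Sg m Q \<omega> th x0 i r p\<bar> \<le> 12 * \<bar>\<omega> (Aidx i r)\<bar>"
proof -
  let ?a = "\<bar>\<omega> (Aidx i r)\<bar>"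
  have t1: "\<bar>Delta Q i x0 * phi' (Net m \<omega> th i (qpt Q j i x0)) * \<omega> (Aidx i r) * relu' (preact \<omega> th i r (qpt Q j i x0)) * (ip i (qpt Q j i x0) p + 1)\<bar>
     \<le> Delta Q i x0 * (4 * ?a)" if j: "j \<in> {1..Q}" for j
  proof -
    have ipb: "\<bar>ip i (qpt Q j i x0) p + 1\<bar> \<le> 4"
      using ip_bound[OF qpt_nice[OF assms(1,2) j] assms(3)] by linarith
    show ?thesis
      by (rule aux5) (use ipb Delta_nonneg[OF assms(1,2)] phi'_bounds relu'_bounds in auto)
  qed
  have s1: "\<bar>\<Sum>j=1..Q. Delta Q i x0 * phi' (Net m \<omega> th i (qpt Q j i x0)) * \<omega> (Aidx i r) * relu' (preact \<omega> th i r (qpt Q j i x0)) * (ip i (qpt Q j i x0) p + 1)\<bar>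
     \<le> 8 * ?a"
  proof -
    have "\<bar>\<Sum>j=1..Q. Delta Q i x0 * phi' (Net m \<omega> th i (qpt Q j i x0)) * \<omega> (Aidx i r) * relu' (preact \<omega> th i r (qpt Q j i x0)) * (ip i (qpt Q j i x0) p + 1)\<bar>
       \<le> (\<Sum>j=1..Q. Delta Q i x0 * (4 * ?a))"
      by (rule order_trans[OF sum_abs sum_mono]) (rule t1)
    also have "\<dots> = (\<Sum>j=1..Q. Delta Q i x0) * (4 * ?a)" by (simp add: sum_distrib_right)
    also have "\<dots> \<le> 2 * (4 * ?a)" using sum_Delta[OF assms(1,2), of Q] by (intro mult_right_mono) auto
    finally show ?thesis by simp
  qed
  have s2: "\<bar>1 * (phi' (Net m \<omega> th i x0) / phi (Net m \<omega> th i x0)) * \<omega> (Aidx i r) * relu' (preact \<omega> th i r x0) * (ip i x0 p + 1)\<bar> \<le> 1 * (4 * ?a)"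
  proof -
    have ipb: "\<bar>ip i x0 p + 1\<bar> \<le> 4"
      using ip_bound[OF ballpt_nice[OF assms(1,2)] assms(3)] by linarith
    show ?thesis by (rule aux5) (use ipb phi'_div relu'_bounds in auto)
  qed
  note s2' = s2[unfolded mult_1]
  show ?thesis unfolding Sg_eq by (rule order_trans[OF abs_triangle_ineq4]) (use s1 s2' in linarith)
qed




lemma preact_sgd_Suc:
  "preact \<omega> (sgd m Q eta \<omega> xs (Suc t)) i r p = preact \<omega> (sgd m Q eta \<omega> xs t) i r p - eta * Sg m Q \<omega> (sgd m Q eta \<omega> xs t) (xs t) i r p"
  unfolding sgd.simps Let_def preact_def Sg_def
  by (simp add: algebra_simps sum.distrib sum_subtractf sum_distrib_left)

lemma drift:
  assumes "\<And>s. ballpt d (xs s)" "i \<in> {1..d}" "eta \<ge> 0" "nice i p"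
  shows "\<bar>preact \<omega> (sgd m Q eta \<omega> xs t) i r p - preact \<omega> zero_params i r p\<bar> \<le> 12 * eta * real t * \<bar>\<omega> (Aidx i r)\<bar>"
proof (induction t)
  case 0 then show ?case by simp
next
  case (Suc t)
  have "\<bar>eta * Sg m Q \<omega> (sgd m Q eta \<omega> xs t) (xs t) i r p\<bar> \<le> eta * (12 * \<bar>\<omega> (Aidx i r)\<bar>)"
    using Sg_bound[OF assms(1,2,4)] assms(3) by (simp add: abs_mult mult_left_mono)
  then show ?case using Suc.IH unfolding preact_sgd_Suc by (simp add: algebra_simps)
qed

lemma relu_lem: assumes "\<bar>y - z\<bar> \<le> B" shows "\<bar>relu y - relu' z * y\<bar> \<le> (if \<bar>z\<bar> \<le> B then B else 0)"
proof -
  have B: "0 \<le> B" using assms by linarith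
  consider "z \<ge> 0" "y \<ge> 0" | "z \<ge> 0" "y < 0" | "z < 0" "y \<ge> 0" | "z < 0" "y < 0" by linarith
  then show ?thesis
  proof cases
    case 1
    then have "relu y = y" "relu' z = 1" unfolding relu_def relu'_def by auto
    then show ?thesis using B by simp
  next
    case 2
    then have "relu y = 0" "relu' z = 1" "\<bar>z\<bar> \<le> B" using assms unfolding relu_def relu'_def by auto
    then show ?thesis using assms 2 by simp
  next
    case 3
    then have "relu y = y" "relu' z = 0" "\<bar>z\<bar> \<le> B" using assms unfolding relu_def relu'_def by auto
    then show ?thesis using assms 3 by simp
  next
    case 4
    then have "relu y = 0" "relu' z = 0" unfolding relu_def relu'_def by auto
    then show ?thesis using B by simp
  qed
qed

definition Gf :: "nat \<Rightarrow> real \<Rightarrow> nat \<Rightarrow> (pidx \<Rightarrow> real) \<Rightarrow> nat \<Rightarrow> (nat \<Rightarrow> real) \<Rightarrow> real" where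
  "Gf m eta t \<omega> i p = (\<Sum>r=1..m. \<bar>\<omega> (Aidx i r)\<bar> *
     (if \<bar>preact \<omega> zero_params i r p\<bar> \<le> 12 * eta * real t * \<bar>\<omega> (Aidx i r)\<bar> then 12 * eta * real t * \<bar>\<omega> (Aidx i r)\<bar> else 0))"

lemma Net_Pseudo:
  assumes "\<And>s. ballpt d (xs s)" "i \<in> {1..d}" "eta \<ge> 0" "nice i p"
  shows "\<bar>Net m \<omega> (sgd m Q eta \<omega> xs t) i p - Pseudo m \<omega> (sgd m Q eta \<omega> xs t) i p\<bar> \<le> Gf m eta t \<omega> i p"
proof -
  let ?th = "sgd m Q eta \<omega> xs t"
  have "Net m \<omega> ?th i p - Pseudo m \<omega> ?th i p = (\<Sum>r=1..m. \<omega> (Aidx i r) * (relu (preact \<omega> ?th i r p) - relu' (preact \<omega> zero_params i r p) * preact \<omega> ?th i r p))"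
    unfolding Net_def Pseudo_def by (simp add: sum_subtractf algebra_simps)
  also have "\<bar>\<dots>\<bar> \<le> Gf m eta t \<omega> i p"
    unfolding Gf_def
  proof (rule order_trans[OF sum_abs sum_mono])
    fix r
    have "\<bar>relu (preact \<omega> ?th i r p) - relu' (preact \<omega> zero_params i r p) * preact \<omega> ?th i r p\<bar>
       \<le> (if \<bar>preact \<omega> zero_params i r p\<bar> \<le> 12 * eta * real t * \<bar>\<omega> (Aidx i r)\<bar> then 12 * eta * real t * \<bar>\<omega> (Aidx i r)\<bar> else 0)"
      by (rule relu_lem) (rule drift[OF assms])
    then show "\<bar>\<omega> (Aidx i r) * (relu (preact \<omega> ?th i r p) - relu' (preact \<omega> zero_params i r p) * preact \<omega> ?th i r p)\<bar>
       \<le> \<bar>\<omega> (Aidx i r)\<bar> * (if \<bar>preact \<omega> zero_params i r p\<bar> \<le> 12 * eta * real t * \<bar>\<omega> (Aidx i r)\<bar> then 12 * eta * real t * \<bar>\<omega> (Aidx i r)\<bar> else 0)"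
      by (simp add: abs_mult mult_left_mono)
  qed
  finally show ?thesis .
qed

lemma phi_lip: "\<bar>phi u - phi v\<bar> \<le> \<bar>u - v\<bar>"
proof -
  have *: "phi v - phi u \<le> v - u \<and> 0 \<le> phi v - phi u" if "u \<le> v" for u v :: real
  proof (cases "v < 0")
    case True
    then have "exp v - exp u = exp v * (1 - exp (u - v))" by (simp add: algebra_simps exp_diff)
    also have "\<dots> \<le> 1 * (v - u)"
    proof (intro mult_mono)
      show "1 - exp (u - v) \<le> v - u" using exp_ge_add_one_self[of "u - v"] by linarith
    qed (use True that in auto)
    finally show ?thesis using True that unfolding phi_def by simp
  next
    case False
    show ?thesis
    proof (cases "u < 0")
      case True
      have e1: "exp u \<le> 1" using True by simp
      have e2: "1 + u \<le> exp u" using exp_ge_add_one_self[of u] by simp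
      have "phi u = exp u" "phi v = v + 1" using False True unfolding phi_def by auto
      then show ?thesis using e1 e2 False by linarith
    next
      case F2: False
      then show ?thesis using False that unfolding phi_def by simp
    qed
  qed
  show ?thesis using *[of u v] *[of v u] by (cases "u \<le> v") auto
qed

lemma phi_mono: assumes "u \<le> v" shows "phi u \<le> phi v"
proof -
  have e: "exp u \<le> 1" if "u < 0" using that by simp
  show ?thesis
  proof (cases "v < 0")
    case True
    then show ?thesis using assms unfolding phi_def by simp
  next
    case False
    show ?thesis
    proof (cases "u < 0")
      case True
      have e1: "exp u \<le> 1" using True by simp
      have "phi u = exp u" "phi v = v + 1" using False True unfolding phi_def by auto
      then show ?thesis using e1 False by linarith
    next
      case F2: False
      then show ?thesis using False assms unfolding phi_def by simp
    qed
  qed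
qed

lemma lnphi_lip: "\<bar>ln (phi u) - ln (phi v)\<bar> \<le> \<bar>u - v\<bar>"
proof -
  have *: "ln (phi v) - ln (phi u) \<le> v - u \<and> 0 \<le> ln (phi v) - ln (phi u)" if "u \<le> v" for u v :: real
  proof -
    have mono: "0 \<le> ln (phi v) - ln (phi u)"
      using phi_mono[OF that] phi_pos[of u] by simp
    have "ln (phi v) - ln (phi u) \<le> v - u"
    proof (cases "v < 0")
      case True then show ?thesis using that unfolding phi_def by simp
    next
      case False
      show ?thesis
      proof (cases "u < 0")
        case True
        then show ?thesis using False ln_le_minus_one[of "v+1"] unfolding phi_def by simp
      next
        case u: False
        have "ln (v + 1) - ln (u + 1) = ln ((v+1)/(u+1))" using u False by (simp add: ln_div)
        also have "\<dots> \<le> (v+1)/(u+1) - 1" using u False by (intro ln_le_minus_one) auto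
        also have "\<dots> = (v - u)/(u+1)" using u by (simp add: field_simps)
        also have "\<dots> \<le> (v - u) / 1" by (rule divide_left_mono) (use u that in auto)
        finally show ?thesis using u False unfolding phi_def by simp
      qed
    qed
    with mono show ?thesis by simp
  qed
  show ?thesis using *[of u v] *[of v u] by (cases "u \<le> v") auto
qed



lemma sets_init_dist[simp]: "sets (init_dist m eps_a p) = sets borel"
  by (cases p) (simp_all add: init_dist_def gauss_def)

lemma comp_meas: "(\<lambda>\<omega>. \<omega> p) \<in> borel_measurable (PiM I (init_dist m eps_a))"
proof (cases "p \<in> I")
  case True
  have "(\<lambda>\<omega>. \<omega> p) \<in> measurable (PiM I (init_dist m eps_a)) (init_dist m eps_a p)"
    using True by (rule measurable_component_singleton)
  then show ?thesis using measurable_cong_sets[OF refl sets_init_dist] by blast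
next
  case False
  have "(\<lambda>\<omega>. (undefined::real)) \<in> borel_measurable (PiM I (init_dist m eps_a))" by simp
  then show ?thesis
    by (rule measurable_cong[THEN iffD1, rotated]) (use False in \<open>auto simp: space_PiM PiE_def extensional_def\<close>)
qed

lemma relu_meas[measurable]: "relu \<in> borel_measurable borel" unfolding relu_def by measurable
lemma relu'_meas[measurable]: "relu' \<in> borel_measurable borel" unfolding relu'_def by measurable
lemma phi_meas[measurable]: "phi \<in> borel_measurable borel" unfolding phi_def by measurable
lemma phi'_meas[measurable]: "phi' \<in> borel_measurable borel" unfolding phi'_def by measurable

lemma preact_meas:
  assumes [measurable]: "\<And>p. (\<lambda>\<omega>. \<omega> p) \<in> borel_measurable M"
    and [measurable]: "\<And>i r k. (\<lambda>\<omega>. fst (th \<omega>) i r k) \<in> borel_measurable M"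
    and [measurable]: "\<And>i r. (\<lambda>\<omega>. snd (th \<omega>) i r) \<in> borel_measurable M"
  shows "(\<lambda>\<omega>. preact \<omega> (th \<omega>) i r z) \<in> borel_measurable M"
  unfolding preact_def by measurable

lemma Net_meas:
  assumes [measurable]: "\<And>p. (\<lambda>\<omega>. \<omega> p) \<in> borel_measurable M"
    and [measurable]: "\<And>i r k. (\<lambda>\<omega>. fst (th \<omega>) i r k) \<in> borel_measurable M"
    and [measurable]: "\<And>i r. (\<lambda>\<omega>. snd (th \<omega>) i r) \<in> borel_measurable M"
  shows "(\<lambda>\<omega>. Net m \<omega> (th \<omega>) i z) \<in> borel_measurable M"
    "(\<lambda>\<omega>. Pseudo m \<omega> (th \<omega>) i z) \<in> borel_measurable M"
proof -
  note [measurable] = preact_meas[OF assms]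
  have [measurable]: "(\<lambda>\<omega>. preact \<omega> zero_params i r z) \<in> borel_measurable M" for i r z
    using preact_meas[of M "\<lambda>_. zero_params"] assms(1) by (simp add: zero_params_def)
  show "(\<lambda>\<omega>. Net m \<omega> (th \<omega>) i z) \<in> borel_measurable M" unfolding Net_def by measurable
  show "(\<lambda>\<omega>. Pseudo m \<omega> (th \<omega>) i z) \<in> borel_measurable M" unfolding Pseudo_def by measurable
qed

lemma grad_meas:
  assumes [measurable]: "\<And>p. (\<lambda>\<omega>. \<omega> p) \<in> borel_measurable M"
    and [measurable]: "\<And>i r k. (\<lambda>\<omega>. fst (th \<omega>) i r k) \<in> borel_measurable M"
    and [measurable]: "\<And>i r. (\<lambda>\<omega>. snd (th \<omega>) i r) \<in> borel_measurable M"
  shows "(\<lambda>\<omega>. gradL_w m Q \<omega> (th \<omega>) x i r k) \<in> borel_measurable M"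
    "(\<lambda>\<omega>. gradL_b m Q \<omega> (th \<omega>) x i r) \<in> borel_measurable M"
proof -
  note [measurable] = preact_meas[OF assms] Net_meas[OF assms]
  show "(\<lambda>\<omega>. gradL_w m Q \<omega> (th \<omega>) x i r k) \<in> borel_measurable M"
    unfolding gradL_w_def gradN_w_def by measurable
  show "(\<lambda>\<omega>. gradL_b m Q \<omega> (th \<omega>) x i r) \<in> borel_measurable M"
    unfolding gradL_b_def gradN_b_def by measurable
qed

lemma sgd_meas:
  assumes [measurable]: "\<And>p. (\<lambda>\<omega>. \<omega> p) \<in> borel_measurable M"
  shows "(\<forall>i r k. (\<lambda>\<omega>. fst (sgd m Q eta \<omega> xs t) i r k) \<in> borel_measurable M) \<and>
         (\<forall>i r. (\<lambda>\<omega>. snd (sgd m Q eta \<omega> xs t) i r) \<in> borel_measurable M)"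
proof (induction t)
  case 0 then show ?case by (simp add: zero_params_def)
next
  case (Suc t)
  have f[measurable]: "\<And>i r k. (\<lambda>\<omega>. fst (sgd m Q eta \<omega> xs t) i r k) \<in> borel_measurable M"
    and s[measurable]: "\<And>i r. (\<lambda>\<omega>. snd (sgd m Q eta \<omega> xs t) i r) \<in> borel_measurable M" using Suc by auto
  note [measurable] = grad_meas[OF assms f s]
  show ?case by (simp add: Let_def)
qed



lemma prob_D: assumes "eps_a > 0" "m \<ge> 1" shows "prob_space (init_dist m eps_a p)"
  using assms by (cases p) (auto simp: init_dist_def gauss_def intro!: prob_space_normal_density)

lemma finite_index: "finite (init_index d m)"
proof -
  have a: "{Aidx i r | i r. i \<in> {1..d} \<and> r \<in> {1..m}} \<subseteq> (\<lambda>(i,r). Aidx i r) ` ({1..d}\<times>{1..m})"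
    by blast
  have w: "{Widx i r k | i r k. i \<in> {1..d} \<and> r \<in> {1..m} \<and> k \<in> {1..i+1}} \<subseteq> (\<lambda>(i,r,k). Widx i r k) ` ({1..d}\<times>{1..m}\<times>{1..d+1})"
  proof
    fix z assume "z \<in> {Widx i r k | i r k. i \<in> {1..d} \<and> r \<in> {1..m} \<and> k \<in> {1..i+1}}"
    then obtain i r k where "z = Widx i r k" "i \<in> {1..d}" "r \<in> {1..m}" "k \<in> {1..i+1}" by blast
    then show "z \<in> (\<lambda>(i,r,k). Widx i r k) ` ({1..d}\<times>{1..m}\<times>{1..d+1})"
      by (intro image_eqI[where x="(i,r,k)"]) auto
  qed
  have b: "{Bidx i r | i r. i \<in> {1..d} \<and> r \<in> {1..m}} \<subseteq> (\<lambda>(i,r). Bidx i r) ` ({1..d}\<times>{1..m})"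
    by blast
  show ?thesis unfolding init_index_def
    by (intro finite_UnI finite_subset[OF a] finite_subset[OF w] finite_subset[OF b] finite_imageI) auto
qed

lemma nd_bound: assumes "s > 0" shows "normal_density 0 s y \<le> 1 / (sqrt (2*pi) * s)"
proof -
  have "normal_density 0 s y = 1 / sqrt (2 * pi * s\<^sup>2) * exp (-(y - 0)\<^sup>2/ (2 * s\<^sup>2))"
    by (simp add: normal_density_def)
  also have "\<dots> \<le> 1 / sqrt (2 * pi * s\<^sup>2) * 1"
    by (intro mult_left_mono) auto
  also have "sqrt (2 * pi * s\<^sup>2) = sqrt (2*pi) * s" using assms by (simp add: real_sqrt_mult)
  finally show ?thesis by simp
qed

lemma gauss_interval: assumes "s > 0" "0 \<le> B"
  shows "emeasure (gauss s) {c - B .. c + B} \<le> ennreal (2 * B / (sqrt (2*pi) * s))"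
proof -
  have "emeasure (gauss s) {c - B .. c + B} = (\<integral>\<^sup>+ y. ennreal (normal_density 0 s y) * indicator {c - B .. c + B} y \<partial>lborel)"
    unfolding gauss_def by (subst emeasure_density) auto
  also have "\<dots> \<le> (\<integral>\<^sup>+ y. ennreal (1 / (sqrt (2*pi) * s)) * indicator {c - B .. c + B} y \<partial>lborel)"
    by (intro nn_integral_mono mult_right_mono) (auto intro!: ennreal_leI nd_bound assms)
  also have "\<dots> = ennreal (1 / (sqrt (2*pi) * s)) * ennreal (2 * B)"
    using assms by (subst nn_integral_cmult_indicator) auto
  also have "\<dots> = ennreal (2 * B / (sqrt (2*pi) * s))"
    using assms by (simp add: ennreal_mult[symmetric])
  finally show ?thesis .
qed

lemma abs_moment3: assumes "e > 0" "K \<ge> 0"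
  shows "(\<integral>\<^sup>+ a. ennreal (K * \<bar>a\<bar>^3) \<partial>gauss e) = ennreal (K * (2 * e^3 * sqrt (2/pi)))"
proof -
  define f where "f a = K * (normal_density 0 e a * \<bar>a - 0\<bar>^(2*1+1))" for a
  have "(\<integral>\<^sup>+ a. ennreal (K * \<bar>a\<bar>^3) \<partial>gauss e) = (\<integral>\<^sup>+ a. ennreal (normal_density 0 e a) * ennreal (K * \<bar>a\<bar>^3) \<partial>lborel)"
    unfolding gauss_def by (subst nn_integral_density) auto
  also have "\<dots> = (\<integral>\<^sup>+ a. ennreal (f a) \<partial>lborel)"
  proof (rule nn_integral_cong)
    fix a
    have "ennreal (normal_density 0 e a) * ennreal (K * \<bar>a\<bar>^3) = ennreal (normal_density 0 e a * (K * \<bar>a\<bar>^3))"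
      by (rule ennreal_mult[symmetric]) (use assms in auto)
    also have "normal_density 0 e a * (K * \<bar>a\<bar>^3) = f a" unfolding f_def by simp
    finally show "ennreal (normal_density 0 e a) * ennreal (K * \<bar>a\<bar>^3) = ennreal (f a)" .
  qed
  also have "\<dots> = ennreal (integral\<^sup>L lborel f)"
  proof (rule nn_integral_eq_integral)
    show "integrable lborel f" unfolding f_def
      by (intro integrable_mult_right integrable_normal_moment_abs) (use assms in auto)
    show "AE x in lborel. 0 \<le> f x" unfolding f_def using assms by simp
  qed
  also have "integral\<^sup>L lborel f = K * (2^1 * e ^ (2 * 1 + 1) * fact 1 * sqrt (2 / pi))"
    unfolding f_def integral_mult_right_zero using integral_normal_moment_abs_odd[where k=1 and \<mu>=0 and \<sigma>=e] assms by simp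
  also have "K * (2^1 * e ^ (2 * 1 + 1) * fact 1 * sqrt (2 / pi)) = K * (2 * e^3 * sqrt (2/pi))"
    by simp
  finally show ?thesis .
qed

lemma ennreal_ind_bound: fixes a L y C :: real
  assumes "C \<ge> 0"
  shows "ennreal (\<bar>a\<bar> * (if \<bar>L + y\<bar> \<le> C * \<bar>a\<bar> then C * \<bar>a\<bar> else 0))
     \<le> ennreal (C * \<bar>a\<bar>^2) * indicator {(-L) - C * \<bar>a\<bar> .. (-L) + C * \<bar>a\<bar>} y"
proof (cases "\<bar>L + y\<bar> \<le> C * \<bar>a\<bar>")
  case True
  then have "y \<in> {(-L) - C * \<bar>a\<bar> .. (-L) + C * \<bar>a\<bar>}" by auto
  then show ?thesis using True by (simp add: power2_eq_square mult_ac)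
next
  case False then show ?thesis by simp
qed

lemma KL:
  assumes "eps_a > 0" "m \<ge> 1" "i \<in> {1..d}" "r \<in> {1..m}" "C \<ge> 0"
  shows "(\<integral>\<^sup>+\<omega>. ennreal (\<bar>\<omega> (Aidx i r)\<bar> * (if \<bar>preact \<omega> zero_params i r p\<bar> \<le> C * \<bar>\<omega> (Aidx i r)\<bar> then C * \<bar>\<omega> (Aidx i r)\<bar> else 0)) \<partial>init_measure d m eps_a)
     \<le> ennreal (2 * C^2 * sqrt m * eps_a^3)"
proof -
  let ?D = "init_dist m eps_a"
  define j where "j = Bidx i r"
  define A where "A = Aidx i r"
  define J where "J = init_index d m - {j}"
  have jI: "j \<in> init_index d m" unfolding init_index_def j_def
    by (intro UnI2) (use assms in blast)
  have IJ: "init_index d m = insert j J" unfolding J_def using jI by (rule insert_Diff[symmetric])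
  have jJ: "j \<notin> J" "finite J" unfolding J_def using finite_index[of d m] by simp_all
  have AI: "A \<in> init_index d m" unfolding init_index_def A_def
    by (intro UnI1) (use assms in blast)
  have AJ: "A \<in> J" unfolding J_def using AI by (simp add: A_def j_def)
  have pD: "prob_space (?D q)" for q by (rule prob_D[OF assms(1,2)])
  have pps: "product_prob_space ?D"
    unfolding product_prob_space_def product_prob_space_axioms_def product_sigma_finite_def
    using pD prob_space_imp_sigma_finite by blast
  interpret P: product_prob_space ?D by (rule pps)
  define L where "L \<omega> = (\<Sum>k=1..i+1. \<omega> (Widx i r k) * xhat i p k)" for \<omega> :: "pidx \<Rightarrow> real"
  define g where "g \<omega> = ennreal (\<bar>\<omega> A\<bar> * (if \<bar>L \<omega> + \<omega> j\<bar> \<le> C * \<bar>\<omega> A\<bar> then C * \<bar>\<omega> A\<bar> else 0))" for \<omega>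
  have pre: "preact \<omega> zero_params i r p = L \<omega> + \<omega> j" for \<omega>
    by (simp add: preact_def L_def j_def zero_params_def)
  have cm[measurable]: "(\<lambda>\<omega>. \<omega> q) \<in> borel_measurable (PiM I ?D)" for q I by (rule comp_meas)
  have gm: "g \<in> borel_measurable (PiM (insert j J) ?D)"
    unfolding g_def L_def by measurable
  have LHS: "(\<integral>\<^sup>+\<omega>. ennreal (\<bar>\<omega> (Aidx i r)\<bar> * (if \<bar>preact \<omega> zero_params i r p\<bar> \<le> C * \<bar>\<omega> (Aidx i r)\<bar> then C * \<bar>\<omega> (Aidx i r)\<bar> else 0)) \<partial>init_measure d m eps_a)
     = integral\<^sup>N (PiM (insert j J) ?D) g"
    unfolding init_measure_def IJ[symmetric] g_def pre A_def by simp
  also have "\<dots> = (\<integral>\<^sup>+ x. (\<integral>\<^sup>+ y. g (x(j := y)) \<partial>?D j) \<partial>PiM J ?D)"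
    by (rule P.product_nn_integral_insert[OF jJ(2,1) gm])
  also have "\<dots> \<le> (\<integral>\<^sup>+ x. ennreal ((2 * C^2 * sqrt m / sqrt (2*pi)) * \<bar>x A\<bar>^3) \<partial>PiM J ?D)"
  proof (rule nn_integral_mono)
    fix x :: "pidx \<Rightarrow> real"
    have Lx: "L (x(j := y)) = L x" for y unfolding L_def j_def by simp
    have Ax: "(x(j := y)) A = x A" for y unfolding A_def j_def by simp
    have Dj: "?D j = gauss (1 / sqrt m)" unfolding j_def init_dist_def by simp
    have "(\<integral>\<^sup>+ y. g (x(j := y)) \<partial>?D j) \<le> (\<integral>\<^sup>+ y. ennreal (C * \<bar>x A\<bar>^2) * indicator {(- L x) - C * \<bar>x A\<bar> .. (- L x) + C * \<bar>x A\<bar>} y \<partial>?D j)"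
      unfolding g_def Lx Ax using assms(5) by (intro nn_integral_mono) (simp add: ennreal_ind_bound[simplified])
    also have "\<dots> = ennreal (C * \<bar>x A\<bar>^2) * emeasure (?D j) {(- L x) - C * \<bar>x A\<bar> .. (- L x) + C * \<bar>x A\<bar>}"
      by (rule nn_integral_cmult_indicator) (simp add: Dj gauss_def)
    also have "\<dots> \<le> ennreal (C * \<bar>x A\<bar>^2) * ennreal (2 * (C * \<bar>x A\<bar>) / (sqrt (2*pi) * (1 / sqrt m)))"
      unfolding Dj by (intro mult_left_mono gauss_interval) (use assms(2,5) in simp_all)
    also have "\<dots> = ennreal (C * \<bar>x A\<bar>^2 * (2 * (C * \<bar>x A\<bar>) / (sqrt (2*pi) * (1 / sqrt m))))"
      by (rule ennreal_mult[symmetric]) (use assms(2,5) in simp_all)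
    also have "C * \<bar>x A\<bar>^2 * (2 * (C * \<bar>x A\<bar>) / (sqrt (2*pi) * (1 / sqrt m))) = (2 * C^2 * sqrt m / sqrt (2*pi)) * \<bar>x A\<bar>^3"
      using assms(2) by (simp add: field_simps power2_eq_square power3_eq_cube)
    finally show "(\<integral>\<^sup>+ y. g (x(j := y)) \<partial>?D j) \<le> ennreal ((2 * C^2 * sqrt m / sqrt (2*pi)) * \<bar>x A\<bar>^3)" .
  qed
  also have "\<dots> = (\<integral>\<^sup>+ a. ennreal ((2 * C^2 * sqrt m / sqrt (2*pi)) * \<bar>a\<bar>^3) \<partial>?D A)"
  proof -
    have d: "distr (PiM J ?D) (?D A) (\<lambda>\<omega>. \<omega> A) = ?D A"
      by (rule distr_PiM_component[OF _ AJ]) (rule prob_D[OF assms(1,2)])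
    have fb: "(\<lambda>a. ennreal ((2 * C^2 * sqrt m / sqrt (2*pi)) * \<bar>a\<bar>^3)) \<in> borel_measurable borel"
      by measurable
    have ms: "measurable (?D A) (borel :: ennreal measure) = measurable borel borel"
      by (rule measurable_cong_sets) simp_all
    have fm: "(\<lambda>a. ennreal ((2 * C^2 * sqrt m / sqrt (2*pi)) * \<bar>a\<bar>^3)) \<in> borel_measurable (?D A)"
      using fb ms by simp
    have "(\<integral>\<^sup>+ a. ennreal ((2 * C^2 * sqrt m / sqrt (2*pi)) * \<bar>a\<bar>^3) \<partial>?D A)
        = (\<integral>\<^sup>+ a. ennreal ((2 * C^2 * sqrt m / sqrt (2*pi)) * \<bar>a\<bar>^3) \<partial>distr (PiM J ?D) (?D A) (\<lambda>\<omega>. \<omega> A))"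
      by (simp only: d)
    also have "\<dots> = (\<integral>\<^sup>+ x. ennreal ((2 * C^2 * sqrt m / sqrt (2*pi)) * \<bar>x A\<bar>^3) \<partial>PiM J ?D)"
      by (rule nn_integral_distr[OF measurable_component_singleton[OF AJ]]) (unfold measurable_distr_eq1, rule fm)
    finally show ?thesis by (rule sym)
  qed
  also have "\<dots> = ennreal ((2 * C^2 * sqrt m / sqrt (2*pi)) * (2 * eps_a^3 * sqrt (2/pi)))"
  proof -
    have DA: "?D A = gauss eps_a" unfolding A_def init_dist_def by simp
    have K: "0 \<le> 2 * C^2 * sqrt m / sqrt (2*pi)" by simp
    show ?thesis unfolding DA by (rule abs_moment3[OF assms(1) K])
  qed
  also have "\<dots> \<le> ennreal (2 * C^2 * sqrt m * eps_a^3)"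
  proof (rule ennreal_leI)
    have s1: "sqrt (2/pi) \<le> 1" using pi_gt3 by simp
    have s2: "2 \<le> sqrt (2*pi)" using pi_gt3 real_sqrt_le_mono[of 4 "2*pi"] by simp
    have X: "0 \<le> C^2 * sqrt m * eps_a^3" using assms(1) by simp
    have "(2 * C^2 * sqrt m / sqrt (2*pi)) * (2 * eps_a^3 * sqrt (2/pi)) = (C^2 * sqrt m * eps_a^3) * (4 * sqrt (2/pi) / sqrt (2*pi))"
      by (simp add: field_simps)
    also have "\<dots> \<le> (C^2 * sqrt m * eps_a^3) * (4 * 1 / 2)"
      by (intro mult_left_mono X frac_le) (use s1 s2 in simp_all)
    finally show "(2 * C^2 * sqrt m / sqrt (2*pi)) * (2 * eps_a^3 * sqrt (2/pi)) \<le> 2 * C^2 * sqrt m * eps_a^3"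
      by simp
  qed
  finally show ?thesis .
qed



lemma Lapprox_diff:
  assumes "Delta Q i x \<ge> 0"
  shows "\<bar>Lapprox Q h1 i x - Lapprox Q h2 i x\<bar> \<le> (\<Sum>j=1..Q. Delta Q i x * \<bar>h1 (qpt Q j i x) - h2 (qpt Q j i x)\<bar>) + \<bar>h1 x - h2 x\<bar>"
proof -
  define S where "S = (\<Sum>j=1..Q. Delta Q i x * (phi (h1 (qpt Q j i x)) - phi (h2 (qpt Q j i x))))"
  define T where "T = ln (phi (h1 x)) - ln (phi (h2 x))"
  have S: "S = (\<Sum>j=1..Q. Delta Q i x * phi (h1 (qpt Q j i x))) - (\<Sum>j=1..Q. Delta Q i x * phi (h2 (qpt Q j i x)))"
    unfolding S_def by (simp only: right_diff_distrib sum_subtractf)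
  have eq: "Lapprox Q h1 i x - Lapprox Q h2 i x = S - T" unfolding Lapprox_def S T_def by linarith
  have tri: "\<bar>S - T\<bar> \<le> \<bar>S\<bar> + \<bar>T\<bar>" by (rule abs_triangle_ineq4)
  have Sb: "\<bar>S\<bar> \<le> (\<Sum>j=1..Q. Delta Q i x * \<bar>h1 (qpt Q j i x) - h2 (qpt Q j i x)\<bar>)"
    unfolding S_def
  proof (rule order_trans[OF sum_abs sum_mono])
    fix j
    show "\<bar>Delta Q i x * (phi (h1 (qpt Q j i x)) - phi (h2 (qpt Q j i x)))\<bar> \<le> Delta Q i x * \<bar>h1 (qpt Q j i x) - h2 (qpt Q j i x)\<bar>"
      unfolding abs_mult abs_of_nonneg[OF assms] by (rule mult_left_mono[OF phi_lip assms])
  qed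
  have Tb: "\<bar>T\<bar> \<le> \<bar>h1 x - h2 x\<bar>" unfolding T_def by (rule lnphi_lip)
  show ?thesis unfolding eq using tri Sb Tb by linarith
qed

definition Ff :: "nat \<Rightarrow> nat \<Rightarrow> real \<Rightarrow> nat \<Rightarrow> (pidx \<Rightarrow> real) \<Rightarrow> nat \<Rightarrow> (nat \<Rightarrow> real) \<Rightarrow> real" where
  "Ff m Q eta t \<omega> i x = (\<Sum>j=1..Q. Delta Q i x * Gf m eta t \<omega> i (qpt Q j i x)) + Gf m eta t \<omega> i x"

lemma det_bound:
  assumes "\<And>s. ballpt d (xs s)" "i \<in> {1..d}" "eta \<ge> 0" "ballpt d x"
  shows "\<bar>Lapprox Q (Net m \<omega> (sgd m Q eta \<omega> xs t) i) i x - Lapprox Q (Pseudo m \<omega> (sgd m Q eta \<omega> xs t) i) i x\<bar> \<le> Ff m Q eta t \<omega> i x"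
proof -
  have D0: "Delta Q i x \<ge> 0" by (rule Delta_nonneg[OF assms(4,2)])
  have "(\<Sum>j=1..Q. Delta Q i x * \<bar>Net m \<omega> (sgd m Q eta \<omega> xs t) i (qpt Q j i x) - Pseudo m \<omega> (sgd m Q eta \<omega> xs t) i (qpt Q j i x)\<bar>)
      \<le> (\<Sum>j=1..Q. Delta Q i x * Gf m eta t \<omega> i (qpt Q j i x))"
  proof (rule sum_mono)
    fix j assume "j \<in> {1..Q}"
    then have "nice i (qpt Q j i x)" by (rule qpt_nice[OF assms(4,2)])
    then show "Delta Q i x * \<bar>Net m \<omega> (sgd m Q eta \<omega> xs t) i (qpt Q j i x) - Pseudo m \<omega> (sgd m Q eta \<omega> xs t) i (qpt Q j i x)\<bar>
      \<le> Delta Q i x * Gf m eta t \<omega> i (qpt Q j i x)"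
      using D0 by (intro mult_left_mono Net_Pseudo[OF assms(1,2,3)]) auto
  qed
  moreover have "\<bar>Net m \<omega> (sgd m Q eta \<omega> xs t) i x - Pseudo m \<omega> (sgd m Q eta \<omega> xs t) i x\<bar> \<le> Gf m eta t \<omega> i x"
    by (rule Net_Pseudo[OF assms(1,2,3) ballpt_nice[OF assms(4,2)]])
  ultimately show ?thesis
    using Lapprox_diff[OF D0, of "Net m \<omega> (sgd m Q eta \<omega> xs t) i" "Pseudo m \<omega> (sgd m Q eta \<omega> xs t) i"]
    unfolding Ff_def by linarith
qed

lemma Gf_term_nonneg: "eta \<ge> 0 \<Longrightarrow> 0 \<le> \<bar>a\<bar> * (if P then 12 * eta * real t * \<bar>a\<bar> else 0)"
  by simp

lemma Gf_nonneg: "eta \<ge> 0 \<Longrightarrow> 0 \<le> Gf m eta t \<omega> i p"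
  unfolding Gf_def by (intro sum_nonneg) simp

lemma pz_meas[measurable]: "(\<lambda>\<omega>. preact \<omega> zero_params i r p) \<in> borel_measurable (PiM I (init_dist m eps_a))"
  using preact_meas[of "PiM I (init_dist m eps_a)" "\<lambda>_. zero_params"] comp_meas by (simp add: zero_params_def)

lemma Gf_meas[measurable]: "(\<lambda>\<omega>. Gf m eta t \<omega> i p) \<in> borel_measurable (PiM I (init_dist m eps_a))"
proof -
  have [measurable]: "(\<lambda>\<omega>. \<omega> q) \<in> borel_measurable (PiM I (init_dist m eps_a))" for q by (rule comp_meas)
  show ?thesis unfolding Gf_def by measurable
qed

lemma EG:
  assumes "eps_a > 0" "m \<ge> 1" "i \<in> {1..d}" "eta \<ge> 0"
  shows "(\<integral>\<^sup>+\<omega>. ennreal (Gf m eta t \<omega> i p) \<partial>init_measure d m eps_a) \<le> ennreal (real m * (2 * (12 * eta * real t)^2 * sqrt m * eps_a^3))"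
proof -
  let ?M = "init_measure d m eps_a"
  let ?T = "\<lambda>r \<omega>. \<bar>\<omega> (Aidx i r)\<bar> * (if \<bar>preact \<omega> zero_params i r p\<bar> \<le> 12 * eta * real t * \<bar>\<omega> (Aidx i r)\<bar> then 12 * eta * real t * \<bar>\<omega> (Aidx i r)\<bar> else 0)"
  have [measurable]: "(\<lambda>\<omega>. \<omega> q) \<in> borel_measurable ?M" for q unfolding init_measure_def by (rule comp_meas)
  have pz[measurable]: "(\<lambda>\<omega>. preact \<omega> zero_params i r p) \<in> borel_measurable ?M" for r
    unfolding init_measure_def by (rule pz_meas)
  have "(\<integral>\<^sup>+\<omega>. ennreal (Gf m eta t \<omega> i p) \<partial>?M) = (\<integral>\<^sup>+\<omega>. (\<Sum>r=1..m. ennreal (?T r \<omega>)) \<partial>?M)"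
    unfolding Gf_def using assms(4) by (intro nn_integral_cong) (simp add: sum_ennreal)
  also have "\<dots> = (\<Sum>r=1..m. (\<integral>\<^sup>+\<omega>. ennreal (?T r \<omega>) \<partial>?M))"
    by (rule nn_integral_sum) measurable
  also have "\<dots> \<le> (\<Sum>r=1..m. ennreal (2 * (12 * eta * real t)^2 * sqrt m * eps_a^3))"
    by (intro sum_mono KL) (use assms in auto)
  also have "\<dots> = ennreal (real m * (2 * (12 * eta * real t)^2 * sqrt m * eps_a^3))"
    using assms by (subst sum_ennreal) auto
  finally show ?thesis .
qed



lemma EF:
  assumes "eps_a > 0" "m \<ge> 1" "i \<in> {1..d}" "eta \<ge> 0" "ballpt d x"
  shows "(\<integral>\<^sup>+\<omega>. ennreal (Ff m Q eta t \<omega> i x) \<partial>init_measure d m eps_a)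
     \<le> ennreal (3 * (real m * (2 * (12 * eta * real t)^2 * sqrt m * eps_a^3)))"
proof -
  let ?M = "init_measure d m eps_a"
  define MB where "MB = real m * (2 * (12 * eta * real t)^2 * sqrt m * eps_a^3)"
  have MB0: "0 \<le> MB" unfolding MB_def using assms by simp
  have D0: "0 \<le> Delta Q i x" by (rule Delta_nonneg[OF assms(5,3)])
  have G0: "0 \<le> Gf m eta t \<omega> i p" for \<omega> p by (rule Gf_nonneg[OF assms(4)])
  have Gm[measurable]: "(\<lambda>\<omega>. Gf m eta t \<omega> i p) \<in> borel_measurable ?M" for p
    unfolding init_measure_def by (rule Gf_meas)
  have EGp: "(\<integral>\<^sup>+\<omega>. ennreal (Gf m eta t \<omega> i p) \<partial>?M) \<le> ennreal MB" for p
    unfolding MB_def by (rule EG[OF assms(1-4)])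
  have "(\<integral>\<^sup>+\<omega>. ennreal (Ff m Q eta t \<omega> i x) \<partial>?M)
      = (\<integral>\<^sup>+\<omega>. (\<Sum>j=1..Q. ennreal (Delta Q i x) * ennreal (Gf m eta t \<omega> i (qpt Q j i x))) + ennreal (Gf m eta t \<omega> i x) \<partial>?M)"
  proof (rule nn_integral_cong)
    fix \<omega>
    have "(\<Sum>j=1..Q. ennreal (Delta Q i x) * ennreal (Gf m eta t \<omega> i (qpt Q j i x)))
        = (\<Sum>j=1..Q. ennreal (Delta Q i x * Gf m eta t \<omega> i (qpt Q j i x)))"
      by (rule sum.cong[OF refl], rule ennreal_mult[symmetric, OF D0 G0])
    also have "\<dots> = ennreal (\<Sum>j=1..Q. Delta Q i x * Gf m eta t \<omega> i (qpt Q j i x))"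
      by (rule sum_ennreal) (rule mult_nonneg_nonneg[OF D0 G0])
    finally have e1: "(\<Sum>j=1..Q. ennreal (Delta Q i x) * ennreal (Gf m eta t \<omega> i (qpt Q j i x))) = ennreal (\<Sum>j=1..Q. Delta Q i x * Gf m eta t \<omega> i (qpt Q j i x))" .
    have S0: "0 \<le> (\<Sum>j=1..Q. Delta Q i x * Gf m eta t \<omega> i (qpt Q j i x))"
      by (rule sum_nonneg) (rule mult_nonneg_nonneg[OF D0 G0])
    show "ennreal (Ff m Q eta t \<omega> i x) = (\<Sum>j=1..Q. ennreal (Delta Q i x) * ennreal (Gf m eta t \<omega> i (qpt Q j i x))) + ennreal (Gf m eta t \<omega> i x)"
      unfolding Ff_def e1 by (rule ennreal_plus[OF S0 G0])
  qed
  also have "\<dots> = (\<integral>\<^sup>+\<omega>. (\<Sum>j=1..Q. ennreal (Delta Q i x) * ennreal (Gf m eta t \<omega> i (qpt Q j i x))) \<partial>?M) + (\<integral>\<^sup>+\<omega>. ennreal (Gf m eta t \<omega> i x) \<partial>?M)"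
    by (rule nn_integral_add) measurable
  finally have split: "(\<integral>\<^sup>+\<omega>. ennreal (Ff m Q eta t \<omega> i x) \<partial>?M) = (\<integral>\<^sup>+\<omega>. (\<Sum>j=1..Q. ennreal (Delta Q i x) * ennreal (Gf m eta t \<omega> i (qpt Q j i x))) \<partial>?M) + (\<integral>\<^sup>+\<omega>. ennreal (Gf m eta t \<omega> i x) \<partial>?M)" .
  have "(\<integral>\<^sup>+\<omega>. (\<Sum>j=1..Q. ennreal (Delta Q i x) * ennreal (Gf m eta t \<omega> i (qpt Q j i x))) \<partial>?M)
      = (\<Sum>j=1..Q. ennreal (Delta Q i x) * (\<integral>\<^sup>+\<omega>. ennreal (Gf m eta t \<omega> i (qpt Q j i x)) \<partial>?M))"
    by (subst nn_integral_sum) (measurable, simp add: nn_integral_cmult)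
  also have "\<dots> \<le> (\<Sum>j=1..Q. ennreal (Delta Q i x) * ennreal MB)"
    by (intro sum_mono mult_left_mono EGp) simp
  also have "\<dots> = (\<Sum>j=1..Q. ennreal (Delta Q i x * MB))"
    by (rule sum.cong[OF refl], rule ennreal_mult[symmetric, OF D0 MB0])
  also have "\<dots> = ennreal (\<Sum>j=1..Q. Delta Q i x * MB)"
    by (rule sum_ennreal) (rule mult_nonneg_nonneg[OF D0 MB0])
  finally have p1: "(\<integral>\<^sup>+\<omega>. (\<Sum>j=1..Q. ennreal (Delta Q i x) * ennreal (Gf m eta t \<omega> i (qpt Q j i x))) \<partial>?M) \<le> ennreal (\<Sum>j=1..Q. Delta Q i x * MB)" .
  have s2: "(\<Sum>j=1..Q. Delta Q i x * MB) \<le> 2 * MB"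
    unfolding sum_distrib_right[symmetric]
    using sum_Delta[OF assms(5,3), of Q] MB0 by (intro mult_right_mono) auto
  have S0: "0 \<le> (\<Sum>j=1..Q. Delta Q i x * MB)" by (rule sum_nonneg) (rule mult_nonneg_nonneg[OF D0 MB0])
  have "(\<integral>\<^sup>+\<omega>. ennreal (Ff m Q eta t \<omega> i x) \<partial>?M) \<le> ennreal (\<Sum>j=1..Q. Delta Q i x * MB) + ennreal MB"
    unfolding split by (rule add_mono[OF p1 EGp])
  also have "\<dots> = ennreal ((\<Sum>j=1..Q. Delta Q i x * MB) + MB)"
    by (rule ennreal_plus[symmetric, OF S0 MB0])
  also have "\<dots> \<le> ennreal (3 * MB)"
    by (rule ennreal_leI) (use s2 in linarith)
  finally show ?thesis unfolding MB_def .
qed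

lemma numeric:
  fixes m t :: nat and c1 c4 eps_a eta :: real
  assumes "m \<ge> 2" "c1 > 10" "c4 \<ge> 1" "eps_a > 0" "eta > 0"
  shows "c1 * (3 * (real m * (2 * (12 * eta * real t)^2 * sqrt m * eps_a^3)))
    \<le> 3 * (192 * eta\<^sup>2 * real m powr (3/2) * (6 * c1 * eps_a * sqrt (2 * ln (real m)))\<^sup>2 * c1 * c4 * eps_a * (real t)\<^sup>2
                   * sqrt (ln (real m)) / sqrt pi)"
proof -
  define W where "W = eta\<^sup>2 * (real t)\<^sup>2 * (real m * sqrt m) * eps_a^3"
  have W0: "0 \<le> W" unfolding W_def using assms by simp
  have m0: "0 < real m" using assms by simp
  have pw: "real m powr (3/2) = real m * sqrt m"
  proof -
    have "real m powr (3/2) = real m powr (1 + 1/2)" by simp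
    also have "\<dots> = real m powr 1 * real m powr (1/2)" by (rule powr_add)
    also have "\<dots> = real m * sqrt m" using m0 by (simp add: powr_half_sqrt)
    finally show ?thesis .
  qed
  have ln23: "2/3 \<le> ln (real m)"
  proof -
    have "ln (2::real) \<le> ln (real m)" using assms(1) by simp
    then show ?thesis using ln2_ge_two_thirds by linarith
  qed
  have ln0: "0 \<le> ln (real m)" using ln23 by linarith
  have lam: "(6 * c1 * eps_a * sqrt (2 * ln (real m)))\<^sup>2 = 72 * c1\<^sup>2 * eps_a\<^sup>2 * ln (real m)"
    using ln0 by (simp add: power_mult_distrib)
  have sl: "1/2 \<le> sqrt (ln (real m))"
  proof -
    have "sqrt (1/4) \<le> sqrt (ln (real m))" using ln23 by (intro real_sqrt_le_mono) linarith
    moreover have "sqrt (1/4::real) = 1/2" by (simp add: real_sqrt_divide)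
    ultimately show ?thesis by simp
  qed
  have sp: "sqrt pi \<le> 2"
  proof -
    have "sqrt pi \<le> sqrt 4" using pi_less_4 by (intro real_sqrt_le_mono) simp
    then show ?thesis by simp
  qed
  have sp0: "0 < sqrt pi" by simp
  define X where "X = c1\<^sup>2 * c4 * ln (real m) * sqrt (ln (real m)) / sqrt pi"
  have X1: "1 \<le> X"
  proof -
    have c10: "10 \<le> c1" using assms(2) by simp
    have a: "10 * 10 \<le> c1 * c1" by (rule mult_mono[OF c10 c10]) (use c10 in simp_all)
    have b1: "100 * 1 \<le> c1\<^sup>2 * c4" unfolding power2_eq_square
      by (rule mult_mono) (use a assms(3) c10 in simp_all)
    have b2: "100 * 1 * (2/3) \<le> c1\<^sup>2 * c4 * ln (real m)"
      by (rule mult_mono[OF b1 ln23]) (use b1 in simp_all)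
    have b3: "100 * 1 * (2/3) * (1/2) \<le> c1\<^sup>2 * c4 * ln (real m) * sqrt (ln (real m))"
      by (rule mult_mono[OF b2 sl]) (use b2 in simp_all)
    then have "2 \<le> c1\<^sup>2 * c4 * ln (real m) * sqrt (ln (real m))" by simp
    then have "2 / sqrt pi \<le> X" unfolding X_def using sp0 by (rule divide_right_mono[OF _ less_imp_le])
    moreover have "1 \<le> 2 / sqrt pi" using sp sp0 by simp
    ultimately show ?thesis by linarith
  qed
  have L: "c1 * (3 * (real m * (2 * (12 * eta * real t)^2 * sqrt m * eps_a^3))) = 864 * (c1 * W)"
    unfolding W_def power_mult_distrib by (simp add: mult_ac)
  have R: "3 * (192 * eta\<^sup>2 * real m powr (3/2) * (6 * c1 * eps_a * sqrt (2 * ln (real m)))\<^sup>2 * c1 * c4 * eps_a * (real t)\<^sup>2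
                   * sqrt (ln (real m)) / sqrt pi) = 41472 * (c1 * W) * X"
    unfolding pw lam W_def X_def by (simp add: field_simps power2_eq_square power3_eq_cube)
  have cW: "0 \<le> c1 * W" using W0 assms(2) by simp
  have "864 * (c1 * W) \<le> 41472 * (c1 * W) * 1" using cW by linarith
  also have "\<dots> \<le> 41472 * (c1 * W) * X" using cW X1 by (intro mult_left_mono) auto
  finally show ?thesis unfolding L R .
qed

theorem lemma5:
  fixes d m Q i t :: nat and eps_a eta c1 c4 :: real
    and xs :: "nat \<Rightarrow> nat \<Rightarrow> real" and x :: "nat \<Rightarrow> real"
  assumes "d \<ge> 1" and "m \<ge> 2" and "eps_a > 0" and "Q \<ge> 1" and "eta > 0"
    and "c1 > 10" and "c4 \<ge> 1"
    and "\<And>s. (\<Sum>k=1..d. (xs s k)\<^sup>2) \<le> 1"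
    and "i \<in> {1..d}"
    and "(\<Sum>k=1..d. (x k)\<^sup>2) \<le> 1"
    and "t \<ge> 1"
  shows
    "let Lam = 6 * c1 * eps_a * sqrt (2 * ln (real m));
         delta = 192 * eta\<^sup>2 * real m powr (3/2) * Lam\<^sup>2 * c1 * c4 * eps_a * (real t)\<^sup>2
                   * sqrt (ln (real m)) / sqrt pi
     in measure (init_measure d m eps_a)
          {\<omega> \<in> space (init_measure d m eps_a).
             \<bar>Lapprox Q (Net m \<omega> (sgd m Q eta \<omega> xs t) i) i x
              - Lapprox Q (Pseudo m \<omega> (sgd m Q eta \<omega> xs t) i) i x\<bar> \<le> 3 * delta}
        \<ge> 1 - 1 / c1
            - exp (- (32 * (c4 - 1)\<^sup>2 * eta\<^sup>2 * (real m)\<^sup>2 * Lam\<^sup>2 * (real t)\<^sup>2) / pi)"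
proof -
  define Lam where "Lam = 6 * c1 * eps_a * sqrt (2 * ln (real m))"
  define delta where "delta = 192 * eta\<^sup>2 * real m powr (3/2) * Lam\<^sup>2 * c1 * c4 * eps_a * (real t)\<^sup>2
                   * sqrt (ln (real m)) / sqrt pi"
  let ?M = "init_measure d m eps_a"
  let ?NL = "\<lambda>\<omega>. Lapprox Q (Net m \<omega> (sgd m Q eta \<omega> xs t) i) i x"
  let ?PL = "\<lambda>\<omega>. Lapprox Q (Pseudo m \<omega> (sgd m Q eta \<omega> xs t) i) i x"
  define MB where "MB = real m * (2 * (12 * eta * real t)^2 * sqrt m * eps_a^3)"
  have m1: "m \<ge> 1" using assms(2) by simp
  have pD: "prob_space (init_dist m eps_a p)" for p by (rule prob_D[OF assms(3) m1])
  interpret M: prob_space ?M unfolding init_measure_def by (rule prob_space_PiM) (rule pD)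
  have cm[measurable]: "(\<lambda>\<omega>. \<omega> q) \<in> borel_measurable ?M" for q
    unfolding init_measure_def by (rule comp_meas)
  have bx: "ballpt d x" unfolding ballpt_def by (rule assms(10))
  have bxs: "ballpt d (xs s)" for s unfolding ballpt_def by (rule assms(8))
  have eta0: "eta \<ge> 0" using assms(5) by simp
  have lnpos: "0 < ln (real m)" using assms(2) by simp
  have Lam0: "0 < Lam" unfolding Lam_def using assms(6) assms(3) lnpos by simp
  have t0: "0 < real t" using assms(11) by simp
  have delta0: "0 < delta" unfolding delta_def using assms(2,3,5,6,7) Lam0 t0 lnpos
    by (intro divide_pos_pos mult_pos_pos) simp_all
  have num: "c1 * (3 * MB) \<le> 3 * delta"
    unfolding MB_def delta_def Lam_def by (rule numeric[OF assms(2,6,7,3,5)])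
  have Gm[measurable]: "(\<lambda>\<omega>. Gf m eta t \<omega> i p) \<in> borel_measurable ?M" for p
    unfolding init_measure_def by (rule Gf_meas)
  have Ffm[measurable]: "(\<lambda>\<omega>. Ff m Q eta t \<omega> i x) \<in> borel_measurable ?M"
    unfolding Ff_def by measurable
  have sgm: "(\<forall>i r k. (\<lambda>\<omega>. fst (sgd m Q eta \<omega> xs t) i r k) \<in> borel_measurable ?M) \<and>
         (\<forall>i r. (\<lambda>\<omega>. snd (sgd m Q eta \<omega> xs t) i r) \<in> borel_measurable ?M)"
    by (rule sgd_meas[OF cm])
  have sg1: "\<And>i r k. (\<lambda>\<omega>. fst (sgd m Q eta \<omega> xs t) i r k) \<in> borel_measurable ?M" using sgm by blast
  have sg2: "\<And>i r. (\<lambda>\<omega>. snd (sgd m Q eta \<omega> xs t) i r) \<in> borel_measurable ?M" using sgm by blast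
  note NPm[measurable] = Net_meas[where th="\<lambda>\<omega>. sgd m Q eta \<omega> xs t", OF cm sg1 sg2]
  have NLm[measurable]: "?NL \<in> borel_measurable ?M" unfolding Lapprox_def by measurable
  have PLm[measurable]: "?PL \<in> borel_measurable ?M" unfolding Lapprox_def by measurable
  define B where "B = {\<omega> \<in> space ?M. 3 * delta < Ff m Q eta t \<omega> i x}"
  define G where "G = {\<omega> \<in> space ?M. \<bar>?NL \<omega> - ?PL \<omega>\<bar> \<le> 3 * delta}"
  have Bs: "B \<in> sets ?M" unfolding B_def by measurable
  have Gs: "G \<in> sets ?M" unfolding G_def by measurable
  have sub: "space ?M - B \<subseteq> G"
  proof
    fix \<omega> assume w: "\<omega> \<in> space ?M - B"
    then have "Ff m Q eta t \<omega> i x \<le> 3 * delta" unfolding B_def by auto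
    moreover have "\<bar>?NL \<omega> - ?PL \<omega>\<bar> \<le> Ff m Q eta t \<omega> i x"
      by (rule det_bound[OF bxs assms(9) eta0 bx])
    ultimately show "\<omega> \<in> G" using w unfolding G_def by auto
  qed
  define c where "c = ennreal (1 / (3 * delta))"
  have mk: "emeasure ?M {\<omega>\<in>space ?M. 1 \<le> c * ennreal (Ff m Q eta t \<omega> i x)}
      \<le> c * (\<integral>\<^sup>+ \<omega>. ennreal (Ff m Q eta t \<omega> i x) * indicator (space ?M) \<omega> \<partial>?M)"
    by (rule nn_integral_Markov_inequality) measurable
  have Bsub: "B \<subseteq> {\<omega>\<in>space ?M. 1 \<le> c * ennreal (Ff m Q eta t \<omega> i x)}"
  proof
    fix \<omega> assume w: "\<omega> \<in> B"
    then have lt: "3 * delta < Ff m Q eta t \<omega> i x" and sp: "\<omega> \<in> space ?M" unfolding B_def by auto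
    have "c * ennreal (Ff m Q eta t \<omega> i x) = ennreal (1 / (3 * delta) * Ff m Q eta t \<omega> i x)"
      unfolding c_def using delta0 lt by (subst ennreal_mult) auto
    moreover have "1 \<le> 1 / (3 * delta) * Ff m Q eta t \<omega> i x" using delta0 lt by (simp add: field_simps)
    ultimately show "\<omega> \<in> {\<omega>\<in>space ?M. 1 \<le> c * ennreal (Ff m Q eta t \<omega> i x)}"
      using sp by (simp add: ennreal_leI)
  qed
  have ind: "(\<integral>\<^sup>+ \<omega>. ennreal (Ff m Q eta t \<omega> i x) * indicator (space ?M) \<omega> \<partial>?M) = (\<integral>\<^sup>+ \<omega>. ennreal (Ff m Q eta t \<omega> i x) \<partial>?M)"
    by (rule nn_integral_cong) simp
  have EFb: "(\<integral>\<^sup>+ \<omega>. ennreal (Ff m Q eta t \<omega> i x) \<partial>?M) \<le> ennreal (3 * MB)"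
    unfolding MB_def by (rule EF[OF assms(3) m1 assms(9) eta0 bx])
  have MB0: "0 \<le> MB" unfolding MB_def using assms(3) by simp
  have "emeasure ?M B \<le> emeasure ?M {\<omega>\<in>space ?M. 1 \<le> c * ennreal (Ff m Q eta t \<omega> i x)}"
    by (rule emeasure_mono[OF Bsub]) measurable
  also have "\<dots> \<le> c * ennreal (3 * MB)"
    using mk unfolding ind by (rule order_trans) (rule mult_left_mono[OF EFb], simp)
  also have "\<dots> = ennreal (1 / (3 * delta) * (3 * MB))"
    unfolding c_def using delta0 MB0 by (subst ennreal_mult) auto
  also have "\<dots> \<le> ennreal (1 / c1)"
  proof (rule ennreal_leI)
    show "1 / (3 * delta) * (3 * MB) \<le> 1 / c1"
      using num delta0 assms(6) by (simp add: field_simps)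
  qed
  finally have eB: "emeasure ?M B \<le> ennreal (1 / c1)" .
  have mB: "measure ?M B \<le> 1 / c1"
    using eB assms(6) by (simp add: M.emeasure_eq_measure)
  have "1 - 1 / c1 \<le> 1 - measure ?M B" using mB by simp
  also have "\<dots> = measure ?M (space ?M - B)" using Bs by (simp add: M.prob_compl)
  also have "\<dots> \<le> measure ?M G" by (rule M.finite_measure_mono[OF sub Gs])
  finally have fin: "1 - 1 / c1 - exp (- (32 * (c4 - 1)\<^sup>2 * eta\<^sup>2 * (real m)\<^sup>2 * Lam\<^sup>2 * (real t)\<^sup>2) / pi) \<le> measure ?M G"
    by (smt (verit) exp_gt_zero)
  show ?thesis using fin unfolding Let_def G_def delta_def Lam_def .
qed


end
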